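(* Let $\mathbf{C}=\mathbf{C}_1\,\dot\cup\,\mathbf{C}_2$ and $\mathbf{B}\in\dot{\mathbb{P}}(\mathbb{L}(\mathbf{C}_1))$ with $|\mathbf{B}|=|\mathbf{C}_1|$. Suppose $\mathbf{W}$ suffices to adjust for confounding of $\mathbf{C}$ on $D$. If for some values $\mathbf{c}_2$ of $\mathbf{C}_2$ and $\mathbf{w}$ of $\mathbf{W}$ (with all conditioning events below of positive probability) $$E[D\mid\mathbf{B}=\mathbf{1},\mathbf{C}_2=\mathbf{c}_2,\mathbf{W}=\mathbf{w}]-\sum_{L\in\mathbf{B}}E[D\mid\mathbf{B}\setminus\{L\}=\mathbf{1},L=0,\mathbf{C}_2=\mathbf{c}_2,\mathbf{W}=\mathbf{w}]>0,$$ then $\mathbf{B}$ is irreducible for $\mathcal{D}(\mathbf{C},\Omega)$.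
   Context: $\Omega$ is a population with a probability distribution; events are binary random variables; $\overline{X}=1-X$; $\mathbb{L}(\mathbf{C})=\mathbf{C}\cup\{\overline{X}:X\in\mathbf{C}\}$; $\dot{\mathbb{P}}(\mathbb{L}(\mathbf{C}))$ is the set of subsets of $\mathbb{L}(\mathbf{C})$ not containing both $X$ and $\overline{X}$; $(L)_{\mathbf{c}}$ is the value of literal $L$ under assignment $\mathbf{c}$; $\bigwedge(\mathbf{B})=\min_{L\in\mathbf{B}}L$. Potential outcomes $\mathcal{D}(\mathbf{C},\Omega)$: values $D_{\mathbf{c}}(\omega)\in\{0,1\}$ for all $\omega$ and assignments $\mathbf{c}$; the observed variables $\mathbf{C}(\omega)$, $D(\omega)$ satisfy consistency $D(\omega)=D_{\mathbf{C}(\omega)}(\omega)$. Since $|\mathbf{B}|=|\mathbf{C}_1|$, setting the literals of $\mathbf{B}$ to values determines an assignment to $\mathbf{C}_1$; conditioning events such as $\{\mathbf{B}\setminus\{L\}=\mathbf{1},L=0\}$ mean the literals of $\mathbf{B}\setminus\{L\}$ equal 1 and $L$ equals 0. A set of covariates $\mathbf{W}$ suffices to adjust for confounding of $\mathbf{C}$ on $D$ if $D_{\mathbf{c}}$ is independent of $\mathbf{C}$ conditional on $\mathbf{W}=\mathbf{w}$ for all $\mathbf{c},\mathbf{w}$. A sufficient cause representation $(\mathbf{A},\mathfrak{B})$ for $\mathcal{D}(\mathbf{C},\Omega)$ is a tuple $\mathbf{A}=\langle A_1,\dots,A_p\rangle$ of binary random variables on $\Omega$ unaffected by interventions on $\mathbf{C}$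 and $\mathfrak{B}=\langle\mathbf{B}_1,\dots,\mathbf{B}_p\rangle$, $\mathbf{B}_i\in\dot{\mathbb{P}}(\mathbb{L}(\mathbf{C}))$, with: $D_{\mathbf{c}}(\omega)=1$ iff some $j$ has $A_j(\omega)=1$ and $(\bigwedge(\mathbf{B}_j))_{\mathbf{c}}=1$. $\mathbf{B}$ is irreducible for $\mathcal{D}(\mathbf{C},\Omega)$ if in every such representation some $\mathbf{B}_i\supseteq\mathbf{B}$. *)

theory Defs
  imports "HOL-Probability.Probability"
begin

text \<open>Binary variables are named by elements of type 'v; an assignment to a set of
variables C is a total function 'v => bool which is False outside C.\<close>

definition asg :: "'v set \<Rightarrow> ('v \<Rightarrow> bool) set" where
  "asg C = {c. \<forall>v. v \<notin> C \<longrightarrow> c v = False}"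

datatype 'v lit = Pos 'v | Neg 'v

definition lits :: "'v set \<Rightarrow> 'v lit set" where
  "lits C = Pos ` C \<union> Neg ` C"

definition dotPow :: "'v set \<Rightarrow> 'v lit set set" where
  "dotPow C = {B. B \<subseteq> lits C \<and> (\<forall>v. \<not> (Pos v \<in> B \<and> Neg v \<in> B))}"

fun litval :: "'v lit \<Rightarrow> ('v \<Rightarrow> bool) \<Rightarrow> bool" where
  "litval (Pos v) c = c v"
| "litval (Neg v) c = (\<not> c v)"

definition conj :: "'v lit set \<Rightarrow> ('v \<Rightarrow> bool) \<Rightarrow> bool" where
  "conj B c = (\<forall>L\<in>B. litval L c)"

text \<open>Sufficient cause representation (A, B) with p components for the potential
outcomes Dpo c (c an assignment to C).  The A_j are binary random variables on Omega
not depending on the intervention c.\<close>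
definition suff_cause_rep ::
  "'a measure \<Rightarrow> 'v set \<Rightarrow> (('v \<Rightarrow> bool) \<Rightarrow> 'a \<Rightarrow> bool)
   \<Rightarrow> nat \<Rightarrow> (nat \<Rightarrow> 'a \<Rightarrow> bool) \<Rightarrow> (nat \<Rightarrow> 'v lit set) \<Rightarrow> bool" where
  "suff_cause_rep M C Dpo p A Bs \<longleftrightarrow>
     (\<forall>j<p. A j \<in> measurable M (count_space UNIV)) \<and>
     (\<forall>j<p. Bs j \<in> dotPow C) \<and>
     (\<forall>\<omega>\<in>space M. \<forall>c\<in>asg C. Dpo c \<omega> \<longleftrightarrow> (\<exists>j<p. A j \<omega> \<and> conj (Bs j) c))"

definition irreducible ::
  "'a measure \<Rightarrow> 'v set \<Rightarrow> (('v \<Rightarrow> bool) \<Rightarrow> 'a \<Rightarrow> bool) \<Rightarrow> 'v lit set \<Rightarrow> bool" where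
  "irreducible M C Dpo B \<longleftrightarrow>
     (\<forall>p A Bs. suff_cause_rep M C Dpo p A Bs \<longrightarrow> (\<exists>i<p. B \<subseteq> Bs i))"

text \<open>W suffices to adjust for confounding of C on D: D_c is independent of the
observed C conditional on W = w, for all c and w (written multiplicatively).\<close>
definition no_confounding ::
  "'a measure \<Rightarrow> 'v set \<Rightarrow> ('a \<Rightarrow> 'v \<Rightarrow> bool) \<Rightarrow> (('v \<Rightarrow> bool) \<Rightarrow> 'a \<Rightarrow> bool)
   \<Rightarrow> ('a \<Rightarrow> 'w) \<Rightarrow> bool" where
  "no_confounding M C Cobs Dpo W \<longleftrightarrow>
     (\<forall>c\<in>asg C. \<forall>c'\<in>asg C. \<forall>w.
        measure M {\<omega>\<in>space M. Dpo c \<omega> \<and> Cobs \<omega> = c' \<and> W \<omega> = w}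
          * measure M {\<omega>\<in>space M. W \<omega> = w}
        = measure M {\<omega>\<in>space M. Dpo c \<omega> \<and> W \<omega> = w}
          * measure M {\<omega>\<in>space M. Cobs \<omega> = c' \<and> W \<omega> = w})"

definition condE :: "'a measure \<Rightarrow> ('a \<Rightarrow> bool) \<Rightarrow> ('a \<Rightarrow> bool) \<Rightarrow> real" where
  "condE M D E = measure M {\<omega>\<in>space M. D \<omega> \<and> E \<omega>} / measure M {\<omega>\<in>space M. E \<omega>}"

end

theory Submission
  imports Defs
begin


fun var :: "'v lit \<Rightarrow> 'v" where
  "var (Pos v) = v" | "var (Neg v) = v"

lemma litval_upd: "var L \<noteq> v \<Longrightarrow> litval L (x(v:=b)) = litval L x"
  by (cases L) auto

lemma litval_flip: "litval L (x(var L := \<not> x (var L))) = (\<not> litval L x)"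
  by (cases L) auto

theorem mainTheorem6:
  fixes M :: "'a measure"
    and C C1 C2 :: "'v set"
    and Cobs :: "'a \<Rightarrow> 'v \<Rightarrow> bool"
    and D :: "'a \<Rightarrow> bool"
    and Dpo :: "('v \<Rightarrow> bool) \<Rightarrow> 'a \<Rightarrow> bool"
    and W :: "'a \<Rightarrow> 'w"
    and B :: "'v lit set"
    and c2 :: "'v \<Rightarrow> bool"
    and w :: 'w
  assumes prob: "prob_space M"
    and finC: "finite C"
    and partC: "C = C1 \<union> C2" "C1 \<inter> C2 = {}"
    and Cobs_asg: "\<forall>\<omega>\<in>space M. Cobs \<omega> \<in> asg C"
    and Cobs_meas: "\<forall>v\<in>C. (\<lambda>\<omega>. Cobs \<omega> v) \<in> measurable M (count_space UNIV)"
    and D_meas: "D \<in> measurable M (count_space UNIV)"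
    and Dpo_meas: "\<forall>c\<in>asg C. Dpo c \<in> measurable M (count_space UNIV)"
    and W_meas: "\<forall>w'. {\<omega>\<in>space M. W \<omega> = w'} \<in> sets M"
    and consistency: "\<forall>\<omega>\<in>space M. D \<omega> = Dpo (Cobs \<omega>) \<omega>"
    and B_dot: "B \<in> dotPow C1"
    and B_card: "card B = card C1"
    and nocf: "no_confounding M C Cobs Dpo W"
    and c2_asg: "c2 \<in> asg C2"
    and pos1: "measure M {\<omega>\<in>space M. (\<forall>L'\<in>B. litval L' (Cobs \<omega>))
                 \<and> (\<forall>v\<in>C2. Cobs \<omega> v = c2 v) \<and> W \<omega> = w} > 0"
    and pos2: "\<forall>L\<in>B. measure M {\<omega>\<in>space M. (\<forall>L'\<in>B - {L}. litval L' (Cobs \<omega>))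
                 \<and> \<not> litval L (Cobs \<omega>) \<and> (\<forall>v\<in>C2. Cobs \<omega> v = c2 v) \<and> W \<omega> = w} > 0"
    and ineq: "condE M D (\<lambda>\<omega>. (\<forall>L'\<in>B. litval L' (Cobs \<omega>))
                 \<and> (\<forall>v\<in>C2. Cobs \<omega> v = c2 v) \<and> W \<omega> = w)
               - (\<Sum>L\<in>B. condE M D (\<lambda>\<omega>. (\<forall>L'\<in>B - {L}. litval L' (Cobs \<omega>))
                 \<and> \<not> litval L (Cobs \<omega>) \<and> (\<forall>v\<in>C2. Cobs \<omega> v = c2 v) \<and> W \<omega> = w)) > 0"
  shows "irreducible M C Dpo B"
proof -
  interpret prob_space M by (rule prob)
  define c where "c = (\<lambda>v. if v \<in> C1 then Pos v \<in> B else c2 v)"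
  define cL where "cL = (\<lambda>L. c(var L := \<not> c (var L)))"
  define PD where "PD = (\<lambda>x. measure M {\<omega>\<in>space M. Dpo x \<omega> \<and> W \<omega> = w})"
  define mW where "mW = measure M {\<omega>\<in>space M. W \<omega> = w}"
  have HB: "B \<subseteq> lits C1" "\<forall>v. \<not> (Pos v \<in> B \<and> Neg v \<in> B)"
    using B_dot by (auto simp: dotPow_def)
  have finC1: "finite C1" using finC partC by auto
  have finB: "finite B"
    by (rule finite_subset[OF HB(1)]) (use finC1 in \<open>simp add: lits_def\<close>)
  have varB: "var L \<in> C1" if "L \<in> B" for L
    using that HB(1) by (cases L) (auto simp: lits_def)
  have injvar: "inj_on var B"
  proof (rule inj_onI)
    fix L L' assume "L \<in> B" "L' \<in> B" "var L = var L'"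
    then show "L = L'" using HB(2) by (cases L; cases L') auto
  qed
  have cover: "var ` B = C1"
    by (rule card_subset_eq[OF finC1]) (use varB injvar B_card in \<open>auto simp: card_image\<close>)
  have HB1: "Pos v \<in> B \<or> Neg v \<in> B" if "v \<in> C1" for v
  proof -
    from that cover obtain L where "L \<in> B" "var L = v" by auto
    then show ?thesis by (cases L) auto
  qed
  have litB: "litval L c" if "L \<in> B" for L
    using that varB[OF that] HB(2) by (cases L) (auto simp: c_def)
  have uniq: "L' = L" if "litval L' c" "litval L c" "var L' = var L" for L L'
    using that by (cases L; cases L') auto
  have c2v: "c2 v = False" if "v \<notin> C2" for v
    using c2_asg that by (auto simp: asg_def)
  have c_asg: "c \<in> asg C"
    using partC c2v by (auto simp: asg_def c_def)
  have cL_asg: "cL L \<in> asg C" if "L \<in> B" for L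
    using c_asg varB[OF that] partC by (auto simp: asg_def cL_def)
  have F1: "((\<forall>L'\<in>B. litval L' x) \<and> (\<forall>v\<in>C2. x v = c2 v)) \<longleftrightarrow> x = c"
    if "x \<in> asg C" for x
  proof
    assume a: "(\<forall>L'\<in>B. litval L' x) \<and> (\<forall>v\<in>C2. x v = c2 v)"
    show "x = c"
    proof
      fix v
      show "x v = c v"
      proof (cases "v \<in> C1")
        case True
        then show ?thesis using HB1[OF True] a HB(2) by (auto simp: c_def)
      next
        case False
        then show ?thesis using a that partC c2v by (auto simp: c_def asg_def)
      qed
    qed
  next
    assume "x = c"
    then show "(\<forall>L'\<in>B. litval L' x) \<and> (\<forall>v\<in>C2. x v = c2 v)"
      using litB partC by (auto simp: c_def)
  qed
  have F2: "((\<forall>L'\<in>B-{L}. litval L' x) \<and> \<not> litval L x \<and> (\<forall>v\<in>C2. x v = c2 v)) \<longleftrightarrow> x = cL L"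
    if "L \<in> B" "x \<in> asg C" for x L
  proof -
    define x' where "x' = x(var L := \<not> x (var L))"
    have x'a: "x' \<in> asg C" using that varB[OF that(1)] partC by (auto simp: asg_def x'_def)
    have vne: "var L' \<noteq> var L" if "L' \<in> B - {L}" for L'
      using injvar that \<open>L \<in> B\<close> by (auto dest: inj_onD)
    have "((\<forall>L'\<in>B-{L}. litval L' x) \<and> \<not> litval L x \<and> (\<forall>v\<in>C2. x v = c2 v))
        \<longleftrightarrow> ((\<forall>L'\<in>B. litval L' x') \<and> (\<forall>v\<in>C2. x' v = c2 v))"
    proof -
      have "(\<forall>L'\<in>B. litval L' x') \<longleftrightarrow> (\<forall>L'\<in>B-{L}. litval L' x) \<and> \<not> litval L x"
      proof -
        have "B = insert L (B - {L})" using \<open>L \<in> B\<close> by blast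
        then have "(\<forall>L'\<in>B. litval L' x') \<longleftrightarrow> litval L x' \<and> (\<forall>L'\<in>B-{L}. litval L' x')"
          by blast
        moreover have "litval L x' = (\<not> litval L x)" unfolding x'_def by (rule litval_flip)
        moreover have "(\<forall>L'\<in>B-{L}. litval L' x') \<longleftrightarrow> (\<forall>L'\<in>B-{L}. litval L' x)"
          unfolding x'_def using vne by (auto simp: litval_upd)
        ultimately show ?thesis by blast
      qed
      moreover have "(\<forall>v\<in>C2. x' v = c2 v) \<longleftrightarrow> (\<forall>v\<in>C2. x v = c2 v)"
        using varB[OF \<open>L \<in> B\<close>] partC by (auto simp: x'_def)
      ultimately show ?thesis by blast
    qed
    also have "\<dots> \<longleftrightarrow> x' = c" by (rule F1[OF x'a])
    also have "\<dots> \<longleftrightarrow> x = cL L"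
      unfolding x'_def cL_def by (auto simp: fun_eq_iff split: if_splits)
    finally show ?thesis .
  qed
  have Dset: "{\<omega>\<in>space M. Dpo x \<omega> \<and> W \<omega> = w} \<in> sets M" if "x \<in> asg C" for x
  proof -
    have "{\<omega>\<in>space M. Dpo x \<omega>} \<in> sets M"
      using Dpo_meas that by (auto intro: measurable_count_space_eq2 simp: pred_def[symmetric])
    then have "{\<omega>\<in>space M. Dpo x \<omega>} \<inter> {\<omega>\<in>space M. W \<omega> = w} \<in> sets M"
      using W_meas by auto
    moreover have "{\<omega>\<in>space M. Dpo x \<omega>} \<inter> {\<omega>\<in>space M. W \<omega> = w} = {\<omega>\<in>space M. Dpo x \<omega> \<and> W \<omega> = w}"
      by auto
    ultimately show ?thesis by simp
  qed
  have condE_eq: "condE M D E = PD x / mW"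
    if x: "x \<in> asg C" and E: "\<forall>\<omega>\<in>space M. E \<omega> \<longleftrightarrow> (Cobs \<omega> = x \<and> W \<omega> = w)"
      and pos: "measure M {\<omega>\<in>space M. E \<omega>} > 0" for x E
  proof -
    have s1: "{\<omega>\<in>space M. D \<omega> \<and> E \<omega>} = {\<omega>\<in>space M. Dpo x \<omega> \<and> Cobs \<omega> = x \<and> W \<omega> = w}"
      using E consistency by auto
    have s2: "{\<omega>\<in>space M. E \<omega>} = {\<omega>\<in>space M. Cobs \<omega> = x \<and> W \<omega> = w}"
      using E by auto
    have n: "measure M {\<omega>\<in>space M. Dpo x \<omega> \<and> Cobs \<omega> = x \<and> W \<omega> = w} * mW
        = PD x * measure M {\<omega>\<in>space M. Cobs \<omega> = x \<and> W \<omega> = w}"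
      using nocf x unfolding no_confounding_def PD_def mW_def by blast
    have "measure M {\<omega>\<in>space M. Cobs \<omega> = x \<and> W \<omega> = w} \<le> mW"
      unfolding mW_def by (rule finite_measure_mono) (use W_meas in auto)
    then have "mW > 0" using pos s2 by simp
    then show ?thesis using n pos unfolding condE_def s1 s2 by (simp add: field_simps)
  qed
  have e1: "condE M D (\<lambda>\<omega>. (\<forall>L'\<in>B. litval L' (Cobs \<omega>))
                 \<and> (\<forall>v\<in>C2. Cobs \<omega> v = c2 v) \<and> W \<omega> = w) = PD c / mW"
    by (rule condE_eq[OF c_asg _ pos1]) (use F1 Cobs_asg in auto)
  have e2: "condE M D (\<lambda>\<omega>. (\<forall>L'\<in>B - {L}. litval L' (Cobs \<omega>))
                 \<and> \<not> litval L (Cobs \<omega>) \<and> (\<forall>v\<in>C2. Cobs \<omega> v = c2 v) \<and> W \<omega> = w) = PD (cL L) / mW"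
    if "L \<in> B" for L
    by (rule condE_eq[OF cL_asg[OF that] _ pos2[rule_format, OF that]]) (use F2[OF that] Cobs_asg in auto)
  have mWpos: "mW > 0"
  proof -
    have "measure M {\<omega>\<in>space M. (\<forall>L'\<in>B. litval L' (Cobs \<omega>))
                 \<and> (\<forall>v\<in>C2. Cobs \<omega> v = c2 v) \<and> W \<omega> = w} \<le> mW"
      unfolding mW_def by (rule finite_measure_mono) (use W_meas in auto)
    then show ?thesis using pos1 by simp
  qed
  have "PD c / mW - (\<Sum>L\<in>B. PD (cL L) / mW) > 0"
    using ineq e1 e2 by (simp cong: sum.cong)
  then have big: "PD c > (\<Sum>L\<in>B. PD (cL L))"
    using mWpos by (simp add: sum_divide_distrib[symmetric] field_simps)
  show ?thesis
    unfolding irreducible_def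
  proof (intro allI impI, rule ccontr)
    fix p A Bs
    assume rep: "suff_cause_rep M C Dpo p A Bs" and nb: "\<not> (\<exists>i<p. B \<subseteq> Bs i)"
    have rep3: "\<forall>\<omega>\<in>space M. \<forall>c\<in>asg C. Dpo c \<omega> \<longleftrightarrow> (\<exists>j<p. A j \<omega> \<and> conj (Bs j) c)"
      using rep unfolding suff_cause_rep_def by blast
    have incl: "{\<omega>\<in>space M. Dpo c \<omega> \<and> W \<omega> = w} \<subseteq> (\<Union>L\<in>B. {\<omega>\<in>space M. Dpo (cL L) \<omega> \<and> W \<omega> = w})"
    proof
      fix \<omega> assume "\<omega> \<in> {\<omega>\<in>space M. Dpo c \<omega> \<and> W \<omega> = w}"
      then have om: "\<omega> \<in> space M" "Dpo c \<omega>" "W \<omega> = w" by auto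
      then obtain j where j: "j < p" "A j \<omega>" "conj (Bs j) c" using rep3 c_asg by blast
      then obtain L where L: "L \<in> B" "L \<notin> Bs j" using nb by blast
      have "conj (Bs j) (cL L)"
        unfolding conj_def cL_def
      proof
        fix L' assume L': "L' \<in> Bs j"
        then have lc: "litval L' c" using j(3) by (auto simp: conj_def)
        have "var L' \<noteq> var L"
          using uniq[OF lc litB[OF L(1)]] L L' by blast
        then show "litval L' (c(var L := \<not> c (var L)))" using litval_upd lc by metis
      qed
      then have "Dpo (cL L) \<omega>" using rep3 om(1) cL_asg[OF L(1)] j by blast
      then show "\<omega> \<in> (\<Union>L\<in>B. {\<omega>\<in>space M. Dpo (cL L) \<omega> \<and> W \<omega> = w})"
        using L om by blast
    qed
    have "PD c \<le> measure M (\<Union>L\<in>B. {\<omega>\<in>space M. Dpo (cL L) \<omega> \<and> W \<omega> = w})"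
      unfolding PD_def
      by (rule finite_measure_mono[OF incl]) (use finB Dset cL_asg in auto)
    also have "\<dots> \<le> (\<Sum>L\<in>B. PD (cL L))"
      unfolding PD_def
      by (rule finite_measure_subadditive_finite[OF finB]) (use Dset cL_asg in auto)
    finally show False using big by simp
  qed
qed


end
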